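(* Let $g$, $\mathbf{g}=g^{\oplus n}$ be as in the context, and let $\mathbf{A},\mathbf{B},\mathbf{C},\mathbf{D}$ be linear operators on $\mathbf{g}$ with components $A_{ij},B_{ij},C_{ij},D_{ij}$ such that $A_{ij}^*=-A_{ji}$, $D_{ij}^*=-D_{ji}$, $B_{ij}^*=C_{ji}$ and such that PB$(\mathbf{A},\mathbf{B},\mathbf{C},\mathbf{D})$ is a Poisson bracket on $\mathbf{g}$. Suppose that (i) $A_{i+1,j+1}-D_{i,j}+B_{i+1,j}-C_{i,j+1}=0$ for $1\le i,j\le n-1$; (ii) $A_{1,j+1}+B_{1,j}=0$ (equivalently $A_{j+1,1}-C_{j,1}=0$) for $1\le j\le n-1$; (iii) $D_{n,j}+C_{n,j+1}=0$ (equivalently $D_{j,n}-B_{j+1,n}=0$) for $1\le j\le n-1$. Define $\mathcal{M}:\mathbf{g}\to g$ by $\mathcal{M}(u_1,\dots,u_n)=u_n\cdot u_{n-1}\cdots u_1$. Then $\mathcal{M}$ is a Poisson map when $g$ is equipped with the bracket PB$(A_{11},B_{1n},C_{n1},D_{nn})$; that is, for all smooth functions $\varphi,\psi$ on $g$, $\{\varphi\circ\mathcal{M},\psi\circ\mathcal{M}\}_{\mathbf{g}}=\{\varphi,\psi\}_{g}\circ\mathcal{M}$, where $\{\cdot,\cdot\}_{\mathbf{g}}$ is PB$(\mathbf{A},\mathbf{B},\mathbf{C},\mathbf{D})$ and $\{\cdot,\cdot\}_g$ is PB$(A_{11},B_{1n},C_{n1},D_{nn})$.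
   Context: $g$ is an associative algebra with a nondegenerate symmetric bilinear form $\langle\cdot,\cdot\rangle$ with $\langle uv,w\rangle=\langle u,vw\rangle$; $X^*$ denotes the adjoint of a linear operator $X$ on $g$. For smooth $\varphi$ on $g$, $\nabla\varphi(u)\in g$ is defined by $\langle\nabla\varphi(u),X\rangle=\frac{d}{d\varepsilon}\varphi(u+\varepsilon X)|_{\varepsilon=0}$ for all $X$, and $d\varphi(u)=u\cdot\nabla\varphi(u)$, $d'\varphi(u)=\nabla\varphi(u)\cdot u$. For linear operators $A,B,C,D$ on $g$, PB$(A,B,C,D)$ is the bracket $\{\varphi,\psi\}(u)=\langle A(d'\varphi),d'\psi\rangle-\langle D(d\varphi),d\psi\rangle+\langle B(d\varphi),d'\psi\rangle-\langle C(d'\varphi),d\psi\rangle$. $\mathbf{g}=g\oplus\cdots\oplus g$ ($n$ copies) has componentwise multiplication and form $\langle\langle\mathbf{u},\mathbf{v}\rangle\rangle=\sum_k\langle u_k,v_k\rangle$. A linear operator $\mathbf{A}$ on $\mathbf{g}$ has components $A_{ij}$ defined by $(\mathbf{A}(\mathbf{u}))_i=\sum_j A_{ij}(u_j)$ (similarly for $\mathbf{B},\mathbf{C},\mathbf{D}$). For smooth $\Phi$ on $\mathbf{g}$, $\nabla_j\Phi$ is the $j$-th component of its gradient with respect to $\langle\langle\cdot,\cdot\rangle\rangle$, $d_j\Phi=u_j\nabla_j\Phi$, $d'_j\Phi=\nabla_j\Phi\, u_j$, and PB$(\mathbf{A},\mathbf{B},\mathbf{C},\mathbf{D})$ is $\{\Phi,\Psi\}(\mathbf{u})=\sum_{i,j}\big(\langle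 A_{ij}(d'_j\Phi),d'_i\Psi\rangle-\langle D_{ij}(d_j\Phi),d_i\Psi\rangle+\langle B_{ij}(d_j\Phi),d'_i\Psi\rangle-\langle C_{ij}(d'_j\Phi),d_i\Psi\rangle\big)$. *)

theory Defs
  imports "HOL-Analysis.Analysis"
begin

fun Ck :: "nat \<Rightarrow> ('v::euclidean_space \<Rightarrow> 'w::euclidean_space) \<Rightarrow> bool" where
  "Ck 0 f = continuous_on UNIV f"
| "Ck (Suc k) f = ((\<forall>x. f differentiable (at x)) \<and>
      (\<forall>b\<in>Basis. Ck k (\<lambda>x. frechet_derivative f (at x) b)))"

definition smooth :: "('v::euclidean_space \<Rightarrow> 'w::euclidean_space) \<Rightarrow> bool" where
  "smooth f \<longleftrightarrow> (\<forall>k. Ck k f)"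

definition assoc_algebra_with_form ::
  "('a::real_vector \<Rightarrow> 'a \<Rightarrow> 'a) \<Rightarrow> ('a \<Rightarrow> 'a \<Rightarrow> real) \<Rightarrow> bool" where
  "assoc_algebra_with_form mul F \<longleftrightarrow>
     bilinear mul \<and> (\<forall>x y z. mul (mul x y) z = mul x (mul y z)) \<and>
     bilinear F \<and> (\<forall>u v. F u v = F v u) \<and>
     (\<forall>u. (\<forall>v. F u v = 0) \<longrightarrow> u = 0) \<and>
     (\<forall>u v w. F (mul u v) w = F u (mul v w))"

definition adj :: "('a \<Rightarrow> 'a \<Rightarrow> real) \<Rightarrow> ('a \<Rightarrow> 'a) \<Rightarrow> ('a \<Rightarrow> 'a)" where
  "adj F X = (THE Y. \<forall>u v. F (X u) v = F u (Y v))"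

definition grad :: "('v \<Rightarrow> 'v \<Rightarrow> real) \<Rightarrow> ('v::real_normed_vector \<Rightarrow> real) \<Rightarrow> 'v \<Rightarrow> 'v" where
  "grad F \<phi> u = (THE w. \<forall>X. F w X = frechet_derivative \<phi> (at u) X)"

definition dL :: "('a \<Rightarrow> 'a \<Rightarrow> 'a) \<Rightarrow> ('a \<Rightarrow> 'a \<Rightarrow> real) \<Rightarrow> ('a::real_normed_vector \<Rightarrow> real) \<Rightarrow> 'a \<Rightarrow> 'a" where
  "dL mul F \<phi> u = mul u (grad F \<phi> u)"

definition dR :: "('a \<Rightarrow> 'a \<Rightarrow> 'a) \<Rightarrow> ('a \<Rightarrow> 'a \<Rightarrow> real) \<Rightarrow> ('a::real_normed_vector \<Rightarrow> real) \<Rightarrow> 'a \<Rightarrow> 'a" where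
  "dR mul F \<phi> u = mul (grad F \<phi> u) u"

definition PB :: "('a \<Rightarrow> 'a \<Rightarrow> 'a) \<Rightarrow> ('a \<Rightarrow> 'a \<Rightarrow> real) \<Rightarrow>
   ('a \<Rightarrow> 'a) \<Rightarrow> ('a \<Rightarrow> 'a) \<Rightarrow> ('a \<Rightarrow> 'a) \<Rightarrow> ('a \<Rightarrow> 'a) \<Rightarrow>
   ('a::real_normed_vector \<Rightarrow> real) \<Rightarrow> ('a \<Rightarrow> real) \<Rightarrow> 'a \<Rightarrow> real" where
  "PB mul F A B C D \<phi> \<psi> u =
     F (A (dR mul F \<phi> u)) (dR mul F \<psi> u) - F (D (dL mul F \<phi> u)) (dL mul F \<psi> u)
   + F (B (dL mul F \<phi> u)) (dR mul F \<psi> u) - F (C (dR mul F \<phi> u)) (dL mul F \<psi> u)"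

definition formN :: "('a \<Rightarrow> 'a \<Rightarrow> real) \<Rightarrow> 'a^'n::finite \<Rightarrow> 'a^'n \<Rightarrow> real" where
  "formN F u v = (\<Sum>k\<in>UNIV. F (u $ k) (v $ k))"

definition inj_comp :: "'n::finite \<Rightarrow> 'a::zero \<Rightarrow> 'a^'n" where
  "inj_comp j x = (\<chi> k. if k = j then x else 0)"

text \<open>Components A_ij of an operator on g^n: (A u)_i = sum_j A_ij (u_j).\<close>
definition comp :: "('a^'n \<Rightarrow> 'a^'n) \<Rightarrow> 'n::finite \<Rightarrow> 'n \<Rightarrow> 'a::zero \<Rightarrow> 'a" where
  "comp A i j x = A (inj_comp j x) $ i"

definition gradN :: "('a \<Rightarrow> 'a \<Rightarrow> real) \<Rightarrow> ('a::euclidean_space^'n::finite \<Rightarrow> real) \<Rightarrow> 'a^'n \<Rightarrow> 'n \<Rightarrow> 'a" where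
  "gradN F \<Phi> u j = grad (formN F) \<Phi> u $ j"

definition dLN :: "('a \<Rightarrow> 'a \<Rightarrow> 'a) \<Rightarrow> ('a \<Rightarrow> 'a \<Rightarrow> real) \<Rightarrow> ('a::euclidean_space^'n::finite \<Rightarrow> real) \<Rightarrow> 'a^'n \<Rightarrow> 'n \<Rightarrow> 'a" where
  "dLN mul F \<Phi> u j = mul (u $ j) (gradN F \<Phi> u j)"

definition dRN :: "('a \<Rightarrow> 'a \<Rightarrow> 'a) \<Rightarrow> ('a \<Rightarrow> 'a \<Rightarrow> real) \<Rightarrow> ('a::euclidean_space^'n::finite \<Rightarrow> real) \<Rightarrow> 'a^'n \<Rightarrow> 'n \<Rightarrow> 'a" where
  "dRN mul F \<Phi> u j = mul (gradN F \<Phi> u j) (u $ j)"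

definition PBN :: "('a \<Rightarrow> 'a \<Rightarrow> 'a) \<Rightarrow> ('a \<Rightarrow> 'a \<Rightarrow> real) \<Rightarrow>
   ('a^'n \<Rightarrow> 'a^'n) \<Rightarrow> ('a^'n \<Rightarrow> 'a^'n) \<Rightarrow> ('a^'n \<Rightarrow> 'a^'n) \<Rightarrow> ('a^'n \<Rightarrow> 'a^'n) \<Rightarrow>
   ('a::euclidean_space^'n::finite \<Rightarrow> real) \<Rightarrow> ('a^'n \<Rightarrow> real) \<Rightarrow> 'a^'n \<Rightarrow> real" where
  "PBN mul F A B C D \<Phi> \<Psi> u =
     (\<Sum>i\<in>UNIV. \<Sum>j\<in>UNIV.
         F (comp A i j (dRN mul F \<Phi> u j)) (dRN mul F \<Psi> u i)
       - F (comp D i j (dLN mul F \<Phi> u j)) (dLN mul F \<Psi> u i)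
       + F (comp B i j (dLN mul F \<Phi> u j)) (dRN mul F \<Psi> u i)
       - F (comp C i j (dRN mul F \<Phi> u j)) (dLN mul F \<Psi> u i))"

definition poisson_bracket :: "(('v::euclidean_space \<Rightarrow> real) \<Rightarrow> ('v \<Rightarrow> real) \<Rightarrow> 'v \<Rightarrow> real) \<Rightarrow> bool" where
  "poisson_bracket P \<longleftrightarrow>
     (\<forall>\<phi> \<psi> \<theta>. smooth \<phi> \<and> smooth \<psi> \<and> smooth \<theta> \<longrightarrow>
        smooth (P \<phi> \<psi>) \<and>
        (\<forall>a b. P (\<lambda>u. a * \<phi> u + b * \<psi> u) \<theta> = (\<lambda>u. a * P \<phi> \<theta> u + b * P \<psi> \<theta> u)) \<and>
        P \<phi> \<psi> = (\<lambda>u. - P \<psi> \<phi> u) \<and>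
        P (\<lambda>u. \<phi> u * \<psi> u) \<theta> = (\<lambda>u. \<phi> u * P \<psi> \<theta> u + \<psi> u * P \<phi> \<theta> u) \<and>
        (\<lambda>u. P \<phi> (P \<psi> \<theta>) u + P \<psi> (P \<theta> \<phi>) u + P \<theta> (P \<phi> \<psi>) u) = (\<lambda>u. 0))"

fun rprod :: "('a \<Rightarrow> 'a \<Rightarrow> 'a) \<Rightarrow> (nat \<Rightarrow> 'a) \<Rightarrow> nat \<Rightarrow> 'a" where
  "rprod mul f 0 = undefined"
| "rprod mul f (Suc 0) = f 1"
| "rprod mul f (Suc (Suc k)) = mul (f (Suc (Suc k))) (rprod mul f (Suc k))"

end

theory Submission imports Defs begin
lemma alg_facts:
  assumes "assoc_algebra_with_form mul F"
  shows "bilinear mul" "\<And>x y z. mul (mul x y) z = mul x (mul y z)" "bilinear F"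
    "\<And>u v. F u v = F v u" "\<And>u. (\<forall>v. F u v = 0) \<Longrightarrow> u = 0"
    "\<And>u v w. F (mul u v) w = F u (mul v w)"
  using assms unfolding assoc_algebra_with_form_def by auto

fun Dr :: "('a::real_vector \<Rightarrow> 'a \<Rightarrow> 'a) \<Rightarrow> (nat \<Rightarrow> 'n) \<Rightarrow> nat \<Rightarrow> 'a^'n \<Rightarrow> 'a^'n \<Rightarrow> 'a" where
  "Dr mul idx 0 u h = 0"
| "Dr mul idx (Suc 0) u h = h $ idx 1"
| "Dr mul idx (Suc (Suc k)) u h =
     mul (u $ idx (Suc (Suc k))) (Dr mul idx (Suc k) u h)
   + mul (h $ idx (Suc (Suc k))) (rprod mul (\<lambda>k. u $ idx k) (Suc k))"

fun Gr :: "('a \<Rightarrow> 'a \<Rightarrow> 'a) \<Rightarrow> (nat \<Rightarrow> 'n) \<Rightarrow> nat \<Rightarrow> 'a^'n \<Rightarrow> 'a \<Rightarrow> nat \<Rightarrow> 'a" where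
  "Gr mul idx 0 u g k = g"
| "Gr mul idx (Suc 0) u g k = g"
| "Gr mul idx (Suc (Suc m)) u g k =
    (if k = Suc (Suc m) then mul (rprod mul (\<lambda>k. u $ idx k) (Suc m)) g
     else Gr mul idx (Suc m) u (mul g (u $ idx (Suc (Suc m)))) k)"

lemma Dr_deriv:
  fixes mul :: "'a::real_normed_vector \<Rightarrow> 'a \<Rightarrow> 'a"
  assumes bb: "bounded_bilinear mul" and m: "m \<ge> 1"
  shows "((\<lambda>u. rprod mul (\<lambda>k. u $ idx k) m) has_derivative Dr mul idx m u) (at u)"
  using m
proof (induction m)
  case 0 then show ?case by simp
next
  case (Suc m)
  show ?case
  proof (cases m)
    case 0
    then show ?thesis
      by (simp add: bounded_linear_imp_has_derivative bounded_linear_vec_nth)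
  next
    case (Suc k)
    have IH: "((\<lambda>u. rprod mul (\<lambda>k. u $ idx k) (Suc k)) has_derivative Dr mul idx (Suc k) u) (at u)"
      using Suc.IH Suc by simp
    have d1: "((\<lambda>u. u $ idx (Suc (Suc k))) has_derivative (\<lambda>h. h $ idx (Suc (Suc k)))) (at u)"
      by (simp add: bounded_linear_imp_has_derivative bounded_linear_vec_nth)
    show ?thesis
      using bounded_bilinear.FDERIV[OF bb d1 IH] Suc by simp
  qed
qed

lemma Dr_rep:
  assumes bl: "bilinear F" and sym: "\<And>x y. F x y = F y x"
    and inv: "\<And>u v w. F (mul u v) w = F u (mul v w)"
    and m: "m \<ge> 1"
  shows "F g (Dr mul idx m u h) = (\<Sum>k=1..m. F (Gr mul idx m u g k) (h $ idx k))"
  using m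
proof (induction m arbitrary: g)
  case 0 then show ?case by simp
next
  case (Suc m)
  have linR: "linear (\<lambda>y. F x y)" for x using bl unfolding bilinear_def by auto
  have Fadd: "F v (x + y) = F v x + F v y" for x y v using linear_add[OF linR] by blast
  show ?case
  proof (cases m)
    case 0
    then show ?thesis by simp
  next
    case (Suc k)
    let ?u = "u $ idx (Suc (Suc k))" and ?P = "rprod mul (\<lambda>k. u $ idx k) (Suc k)"
    have IH: "F (mul g ?u) (Dr mul idx (Suc k) u h) = (\<Sum>j=1..Suc k. F (Gr mul idx (Suc k) u (mul g ?u) j) (h $ idx j))"
      using Suc.IH Suc by simp
    have e2: "F g (mul (h $ idx (Suc (Suc k))) ?P) = F (mul ?P g) (h $ idx (Suc (Suc k)))"
      by (metis sym inv)
    have "F g (Dr mul idx (Suc (Suc k)) u h) = F (mul g ?u) (Dr mul idx (Suc k) u h)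
        + F (mul ?P g) (h $ idx (Suc (Suc k)))"
      by (simp add: Fadd inv e2)
    also have "\<dots> = (\<Sum>j=1..Suc (Suc k). F (Gr mul idx (Suc (Suc k)) u g j) (h $ idx j))"
      unfolding IH by (simp add: sum.cl_ivl_Suc)
    finally show ?thesis using Suc by simp
  qed
qed

lemma Gr_first:
  assumes ass: "\<And>x y z. mul (mul x y) z = mul x (mul y z)" and m: "m \<ge> 1"
  shows "mul (Gr mul idx m u g 1) (u $ idx 1) = mul g (rprod mul (\<lambda>k. u $ idx k) m)"
  using m
proof (induction m arbitrary: g)
  case 0 then show ?case by simp
next
  case (Suc m)
  then show ?case by (cases m) (simp_all add: ass)
qed

lemma Gr_last:
  assumes ass: "\<And>x y z. mul (mul x y) z = mul x (mul y z)" and m: "m \<ge> 1"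
  shows "mul (u $ idx m) (Gr mul idx m u g m) = mul (rprod mul (\<lambda>k. u $ idx k) m) g"
  using m
proof (cases m)
  case 0 then show ?thesis using m by simp
next
  case (Suc k)
  then show ?thesis by (cases k) (simp_all add: ass)
qed

lemma Gr_mid:
  assumes ass: "\<And>x y z. mul (mul x y) z = mul x (mul y z)"
  shows "1 \<le> k \<Longrightarrow> k < m \<Longrightarrow>
    mul (u $ idx k) (Gr mul idx m u g k) = mul (Gr mul idx m u g (Suc k)) (u $ idx (Suc k))"
proof (induction m arbitrary: g)
  case 0 then show ?case by simp
next
  case (Suc m)
  show ?case
  proof (cases m)
    case 0 then show ?thesis using Suc by simp
  next
    case (Suc j)
    show ?thesis
    proof (cases "k = Suc j")
      case True
      then show ?thesis using Gr_last[OF ass, of "Suc j" u idx "mul g (u $ idx (Suc (Suc j)))"] Suc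
        by (simp add: ass)
    next
      case False
      then have "k < Suc j" using Suc.prems Suc by simp
      then show ?thesis using Suc.IH[of "mul g (u $ idx (Suc (Suc j)))"] Suc.prems Suc False by simp
    qed
  qed
qed
lemma riesz:
  fixes F :: "'a::euclidean_space \<Rightarrow> 'a \<Rightarrow> real"
  assumes bl: "bilinear F" and nd: "\<forall>u. (\<forall>v. F u v = 0) \<longrightarrow> u = 0" and l: "linear l"
  shows "\<exists>g. \<forall>X. F g X = l X"
proof -
  have linL: "linear (\<lambda>x. F x y)" for y using bl unfolding bilinear_def by auto
  have linR: "linear (\<lambda>y. F x y)" for x using bl unfolding bilinear_def by auto
  define T where "T g = (\<Sum>b\<in>Basis. F g b *\<^sub>R b)" for g :: 'a
  have linT: "linear T"
    by (rule linearI) (simp_all add: T_def linear_add[OF linL] linear_scale[OF linL]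
        scaleR_add_left sum.distrib scaleR_sum_right)
  have rep: "F g X = (\<Sum>b\<in>Basis. (X \<bullet> b) * F g b)" for g X
  proof -
    have "F g X = F g (\<Sum>b\<in>Basis. (X \<bullet> b) *\<^sub>R b)" by (simp add: euclidean_representation)
    also have "\<dots> = (\<Sum>b\<in>Basis. (X \<bullet> b) * F g b)"
      using linR[of g] by (simp add: linear_sum linear_scale)
    finally show ?thesis .
  qed
  have Tb: "T g \<bullet> b = F g b" if "b \<in> Basis" for g b
    using that unfolding T_def by (simp add: inner_sum_left inner_Basis if_distrib sum.delta cong: if_cong)
  have "inj T"
  proof (rule linear_injective_0[OF linT, THEN iffD2], intro allI impI)
    fix g assume "T g = 0"
    then have "F g b = 0" if "b \<in> Basis" for b using Tb[OF that, of g] \<open>T g = 0\<close> by simp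
    then have "\<forall>v. F g v = 0" by (subst rep) simp
    then show "g = 0" using nd by blast
  qed
  then have "surj T" using linear_injective_imp_surjective linT by blast
  then obtain g where g: "T g = (\<Sum>b\<in>Basis. l b *\<^sub>R b)" by (metis surjD)
  have gb: "F g b = l b" if "b \<in> Basis" for b
    using Tb[OF that, of g] that unfolding g by (simp add: inner_sum_left inner_Basis if_distrib sum.delta cong: if_cong)
  have lrep: "l X = (\<Sum>b\<in>Basis. (X \<bullet> b) * l b)" for X
  proof -
    have "l X = l (\<Sum>b\<in>Basis. (X \<bullet> b) *\<^sub>R b)" by (simp add: euclidean_representation)
    also have "\<dots> = (\<Sum>b\<in>Basis. (X \<bullet> b) * l b)"
      using l by (simp add: linear_sum linear_scale)
    finally show ?thesis .
  qed
  have "F g X = l X" for X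
    unfolding rep[of g X] lrep[of X] using gb by (intro sum.cong) auto
  then show ?thesis by blast
qed
lemma sum_shift1:
  "(\<Sum>j=1..Suc m. P (j - 1) + Q j) = P 0 + Q (Suc m) + (\<Sum>j=1..m. P j + Q j)"
  for P Q :: "nat \<Rightarrow> real"
  by (induction m) (simp_all add: sum.cl_ivl_Suc)

lemma sum_first: "(\<Sum>i=1..Suc m. X i) = X 1 + (\<Sum>i=1..m. X (Suc i))" for X :: "nat \<Rightarrow> real"
  by (induction m) (simp_all add: sum.cl_ivl_Suc)

lemma sum_last: "(\<Sum>i=1..Suc m. X i) = (\<Sum>i=1..m. X i) + X (Suc m)" for X :: "nat \<Rightarrow> real"
  by (simp add: sum.cl_ivl_Suc)

lemma algebra_part:
  fixes F :: "'a::real_vector \<Rightarrow> 'a \<Rightarrow> real"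
    and a b c d :: "nat \<Rightarrow> nat \<Rightarrow> 'a \<Rightarrow> 'a" and z w :: "nat \<Rightarrow> 'a"
  assumes bl: "bilinear F" and sym: "\<And>x y. F x y = F y x"
    and n: "n \<ge> 1"
    and aA: "\<And>i j x y. F (a i j x) y = - F x (a j i y)"
    and aD: "\<And>i j x y. F (d i j x) y = - F x (d j i y)"
    and aB: "\<And>i j x y. F (b i j x) y = F x (c j i y)"
    and c1: "\<forall>i\<in>{1..n-1}. \<forall>j\<in>{1..n-1}. \<forall>x.
        a (i+1) (j+1) x - d i j x + b (i+1) j x - c i (j+1) x = 0"
    and c2: "\<forall>j\<in>{1..n-1}. \<forall>x. a 1 (j+1) x + b 1 j x = 0"
    and c3: "\<forall>j\<in>{1..n-1}. \<forall>x. d n j x + c n (j+1) x = 0"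
  shows "(\<Sum>i=1..n. \<Sum>j=1..n.
            F (a i j (z (j-1))) (w (i-1)) - F (d i j (z j)) (w i)
          + F (b i j (z j)) (w (i-1)) - F (c i j (z (j-1))) (w i))
       = F (a 1 1 (z 0)) (w 0) - F (d n n (z n)) (w n)
          + F (b 1 n (z n)) (w 0) - F (c n 1 (z 0)) (w n)"
proof -
  have linL: "linear (\<lambda>x. F x y)" for y using bl unfolding bilinear_def by auto
  have linR: "linear (\<lambda>y. F x y)" for x using bl unfolding bilinear_def by auto
  have Fadd: "F (x + y) v = F x v + F y v" for x y v using linear_add[OF linL] by blast
  have Fsub: "F (x - y) v = F x v - F y v" for x y v using linear_diff[OF linL] by blast
  have F0: "F 0 v = 0" for v using linear_0[OF linL] by blast
  have Fneg2: "F v (- x) = - F v x" for x v using linear_neg[OF linR] by blast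
  obtain m where m: "n = Suc m" using n by (cases n) auto
  define Xr where "Xr i = (\<Sum>j=1..n. F (a i j (z (j-1))) (w (i-1)) + F (b i j (z j)) (w (i-1)))" for i
  define Yr where "Yr i = (\<Sum>j=1..n. F (c i j (z (j-1))) (w i) + F (d i j (z j)) (w i))" for i
  have S: "(\<Sum>i=1..n. \<Sum>j=1..n.
            F (a i j (z (j-1))) (w (i-1)) - F (d i j (z j)) (w i)
          + F (b i j (z j)) (w (i-1)) - F (c i j (z (j-1))) (w i))
        = (\<Sum>i=1..n. Xr i) - (\<Sum>i=1..n. Yr i)"
    unfolding Xr_def Yr_def sum_subtractf[symmetric] sum.distrib[symmetric]
    by (intro sum.cong refl) simp
  have Xrow: "Xr i = F (a i 1 (z 0)) (w (i-1)) + F (b i n (z n)) (w (i-1))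
     + (\<Sum>j=1..m. F (a i (Suc j) (z j)) (w (i-1)) + F (b i j (z j)) (w (i-1)))" for i
  proof -
    have "Xr i = (\<Sum>j=1..Suc m. (\<lambda>j. F (a i (Suc j) (z j)) (w (i-1))) (j-1) + F (b i j (z j)) (w (i-1)))"
      unfolding Xr_def m by (intro sum.cong) auto
    also have "\<dots> = (\<lambda>j. F (a i (Suc j) (z j)) (w (i-1))) 0 + (\<lambda>j. F (b i j (z j)) (w (i-1))) (Suc m) + (\<Sum>j=1..m. (\<lambda>j. F (a i (Suc j) (z j)) (w (i-1))) j + (\<lambda>j. F (b i j (z j)) (w (i-1))) j)"
      by (rule sum_shift1)
    finally show ?thesis by (simp add: m)
  qed
  have Yrow: "Yr i = F (c i 1 (z 0)) (w i) + F (d i n (z n)) (w i)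
     + (\<Sum>j=1..m. F (c i (Suc j) (z j)) (w i) + F (d i j (z j)) (w i))" for i
  proof -
    have "Yr i = (\<Sum>j=1..Suc m. (\<lambda>j. F (c i (Suc j) (z j)) (w i)) (j-1) + F (d i j (z j)) (w i))"
      unfolding Yr_def m by (intro sum.cong) auto
    also have "\<dots> = (\<lambda>j. F (c i (Suc j) (z j)) (w i)) 0 + (\<lambda>j. F (d i j (z j)) (w i)) (Suc m) + (\<Sum>j=1..m. (\<lambda>j. F (c i (Suc j) (z j)) (w i)) j + (\<lambda>j. F (d i j (z j)) (w i)) j)"
      by (rule sum_shift1)
    finally show ?thesis by (simp add: m)
  qed
  have mid: "Xr (Suc i) = Yr i" if i: "i \<in> {1..m}" for i
  proof -
    have e1: "F (a (Suc i) 1 x) y = F (c i 1 x) y" for x y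
    proof -
      have "a 1 (i+1) y = - b 1 i y" using c2 i m by (simp add: eq_neg_iff_add_eq_0)
      then show ?thesis using aA[of "Suc i" 1 x y] aB[of 1 i y x] sym Fneg2 by simp
    qed
    have e2: "F (b (Suc i) n x) y = F (d i n x) y" for x y
    proof -
      have "d n i y = - c n (i+1) y" using c3 i m by (simp add: eq_neg_iff_add_eq_0)
      then show ?thesis using aD[of i n x y] aB[of "Suc i" n x y] Fneg2 by simp
    qed
    have e3: "F (a (Suc i) (Suc j) x) y + F (b (Suc i) j x) y = F (c i (Suc j) x) y + F (d i j x) y"
      if "j \<in> {1..m}" for j x y
    proof -
      have "a (i+1) (j+1) x - d i j x + b (i+1) j x - c i (j+1) x = 0" using c1 i that m by auto
      then have "F (a (i+1) (j+1) x - d i j x + b (i+1) j x - c i (j+1) x) y = 0" using F0 by simp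
      then show ?thesis by (simp add: Fadd Fsub)
    qed
    have s: "(\<Sum>j=1..m. F (a (Suc i) (Suc j) (z j)) (w i) + F (b (Suc i) j (z j)) (w i))
        = (\<Sum>j=1..m. F (c i (Suc j) (z j)) (w i) + F (d i j (z j)) (w i))"
      by (intro sum.cong refl e3) auto
    have "Xr (Suc i) = F (a (Suc i) 1 (z 0)) (w i) + F (b (Suc i) n (z n)) (w i)
       + (\<Sum>j=1..m. F (a (Suc i) (Suc j) (z j)) (w i) + F (b (Suc i) j (z j)) (w i))"
      using Xrow[of "Suc i"] by simp
    then show ?thesis unfolding Yrow[of i] e1 e2 s by simp
  qed
  have X1: "Xr 1 = F (a 1 1 (z 0)) (w 0) + F (b 1 n (z n)) (w 0)"
  proof -
    have "F (a 1 (Suc j) (z j)) (w 0) + F (b 1 j (z j)) (w 0) = 0" if "j \<in> {1..m}" for j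
    proof -
      have "a 1 (j+1) (z j) + b 1 j (z j) = 0" using c2 that m by auto
      then show ?thesis using Fadd[symmetric] F0 by (metis Suc_eq_plus1)
    qed
    then show ?thesis unfolding Xrow by simp
  qed
  have Yn: "Yr n = F (c n 1 (z 0)) (w n) + F (d n n (z n)) (w n)"
  proof -
    have "F (c n (Suc j) (z j)) (w n) + F (d n j (z j)) (w n) = 0" if "j \<in> {1..m}" for j
    proof -
      have "d n j (z j) + c n (j+1) (z j) = 0" using c3 that m by auto
      then show ?thesis using Fadd[symmetric] F0 by (metis Suc_eq_plus1 add.commute)
    qed
    then show ?thesis unfolding Yrow by simp
  qed
  have "(\<Sum>i=1..n. Xr i) - (\<Sum>i=1..n. Yr i) = Xr 1 - Yr n"
    unfolding m sum_first[of Xr] sum_last[of Yr] using mid by simp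
  then show ?thesis unfolding S X1 Yn by simp
qed

lemma grad_eqI:
  fixes F' :: "'v::real_normed_vector \<Rightarrow> 'v \<Rightarrow> real"
  assumes nd: "\<forall>w. (\<forall>v. F' w v = 0) \<longrightarrow> w = 0"
    and sub: "\<And>x y v. F' (x - y) v = F' x v - F' y v"
    and w: "\<forall>X. F' w X = frechet_derivative f (at x) X"
  shows "grad F' f x = w"
  unfolding grad_def
proof (rule the_equality)
  show "\<forall>X. F' w X = frechet_derivative f (at x) X" by (rule w)
next
  fix w' assume "\<forall>X. F' w' X = frechet_derivative f (at x) X"
  then have "\<forall>v. F' (w' - w) v = 0" using w sub by simp
  then show "w' = w" using nd by fastforce
qed

lemma grad_works:
  fixes F :: "'a::euclidean_space \<Rightarrow> 'a \<Rightarrow> real"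
  assumes bl: "bilinear F" and nd: "\<forall>u. (\<forall>v. F u v = 0) \<longrightarrow> u = 0"
    and d: "f differentiable (at x)"
  shows "\<forall>X. F (grad F f x) X = frechet_derivative f (at x) X"
proof -
  have "linear (frechet_derivative f (at x))"
    using d frechet_derivative_works has_derivative_linear by blast
  then obtain g where g: "\<forall>X. F g X = frechet_derivative f (at x) X"
    using riesz[OF bl nd] by blast
  have linL: "linear (\<lambda>x. F x y)" for y using bl unfolding bilinear_def by auto
  have "grad F f x = g"
    by (rule grad_eqI[where w=g, OF nd _ g]) (use linear_diff[OF linL] in blast)
  then show ?thesis using g by simp
qed

lemma adj_works:
  fixes F :: "'a::euclidean_space \<Rightarrow> 'a \<Rightarrow> real"
  assumes bl: "bilinear F" and nd: "\<forall>u. (\<forall>v. F u v = 0) \<longrightarrow> u = 0"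
    and sym: "\<And>x y. F x y = F y x"
    and X: "linear X"
  shows "F (X u) v = F u (adj F X v)"
proof -
  have linL: "linear (\<lambda>x. F x y)" for y using bl unfolding bilinear_def by auto
  have linR: "linear (\<lambda>y. F x y)" for x using bl unfolding bilinear_def by auto
  have "\<exists>g. \<forall>u. F g u = F (X u) v" for v
    by (rule riesz[OF bl nd]) (rule linear_compose[OF X linL, unfolded o_def])
  then obtain Y where Y: "\<And>v u. F (Y v) u = F (X u) v" by metis
  have "adj F X = Y" unfolding adj_def
  proof (rule the_equality)
    show "\<forall>u v. F (X u) v = F u (Y v)" using Y sym by simp
  next
    fix Y' assume Y': "\<forall>u v. F (X u) v = F u (Y' v)"
    show "Y' = Y"
    proof
      fix v
      have "\<forall>u. F (Y' v - Y v) u = 0"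
        using Y Y' sym linear_diff[OF linL] by simp
      then show "Y' v = Y v" using nd by fastforce
    qed
  qed
  then show ?thesis using Y sym by simp
qed

lemma linear_comp:
  fixes A :: "'a::real_vector^'n::finite \<Rightarrow> 'a^'n"
  assumes "linear A" shows "linear (comp A i j)"
proof -
  have "linear (inj_comp j :: 'a \<Rightarrow> 'a^'n)"
    by (rule linearI) (simp_all add: inj_comp_def vec_eq_iff)
  then show ?thesis unfolding comp_def
    by (intro linearI) (simp_all add: linear_add[OF \<open>linear (inj_comp j)\<close>] linear_scale[OF \<open>linear (inj_comp j)\<close>]
          linear_add[OF assms] linear_scale[OF assms])
qed

lemma formN_facts:
  fixes F :: "'a::real_vector \<Rightarrow> 'a \<Rightarrow> real"
  assumes bl: "bilinear F" and nd: "\<forall>u. (\<forall>v. F u v = 0) \<longrightarrow> u = 0"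
  shows "\<forall>w::'a^'n::finite. (\<forall>v. formN F w v = 0) \<longrightarrow> w = 0"
    and "\<And>x y v :: 'a^'n. formN F (x - y) v = formN F x v - formN F y v"
proof -
  have linL: "linear (\<lambda>x. F x y)" for y using bl unfolding bilinear_def by auto
  have linR: "linear (\<lambda>y. F x y)" for x using bl unfolding bilinear_def by auto
  have F0: "F x 0 = 0" for x using linear_0[OF linR] by blast
  show "formN F (x - y) v = formN F x v - formN F y v" for x y v :: "'a^'n"
    unfolding formN_def by (simp add: linear_diff[OF linL] sum_subtractf)
  show "\<forall>w::'a^'n. (\<forall>v. formN F w v = 0) \<longrightarrow> w = 0"
  proof (intro allI impI)
    fix w :: "'a^'n" assume h: "\<forall>v. formN F w v = 0"
    have "w $ j = 0" for j
    proof -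
      have "F (w $ j) y = 0" for y
      proof -
        have "formN F w (inj_comp j y) = (\<Sum>k\<in>UNIV. if k = j then F (w $ k) y else 0)"
          unfolding formN_def inj_comp_def by (intro sum.cong refl) (simp add: F0)
        also have "\<dots> = F (w $ j) y" by simp
        finally show ?thesis using h by simp
      qed
      then show ?thesis using nd by blast
    qed
    then show "w = 0" by (simp add: vec_eq_iff)
  qed
qed

lemma gradN_rprod:
  fixes mul :: "'a::euclidean_space \<Rightarrow> 'a \<Rightarrow> 'a" and idx :: "nat \<Rightarrow> 'n::finite"
  assumes alg: "assoc_algebra_with_form mul F" and n: "n \<ge> 1" and idx: "bij_betw idx {1..n} UNIV"
    and d: "\<forall>x. \<phi> differentiable (at x)" and k: "k \<in> {1..n}"
  shows "gradN F (\<lambda>u. \<phi> (rprod mul (\<lambda>k. u $ idx k) n)) u (idx k)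
       = Gr mul idx n u (grad F \<phi> (rprod mul (\<lambda>k. u $ idx k) n)) k"
proof -
  note af = alg_facts[OF alg]
  have nd: "\<forall>u. (\<forall>v. F u v = 0) \<longrightarrow> u = 0" using af(5) by blast
  define M where "M = rprod mul (\<lambda>k. u $ idx k) n"
  define g where "g = grad F \<phi> M"
  have gw: "\<forall>X. F g X = frechet_derivative \<phi> (at M) X"
    unfolding g_def using grad_works[OF af(3) nd] d by blast
  have bb: "bounded_bilinear mul" using af(1) bilinear_conv_bounded_bilinear by blast
  have dM: "((\<lambda>u. rprod mul (\<lambda>k. u $ idx k) n) has_derivative Dr mul idx n u) (at u)"
    by (rule Dr_deriv[OF bb n])
  have dphi: "(\<phi> has_derivative frechet_derivative \<phi> (at M)) (at M)"
    using d frechet_derivative_works by blast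
  have chain: "((\<lambda>u. \<phi> (rprod mul (\<lambda>k. u $ idx k) n)) has_derivative
      (\<lambda>h. frechet_derivative \<phi> (at M) (Dr mul idx n u h))) (at u)"
    using diff_chain_at[OF dM dphi[unfolded M_def]] by (simp add: o_def M_def)
  then have fd: "frechet_derivative (\<lambda>u. \<phi> (rprod mul (\<lambda>k. u $ idx k) n)) (at u)
      = (\<lambda>h. frechet_derivative \<phi> (at M) (Dr mul idx n u h))"
    using frechet_derivative_at by metis
  define cand where "cand = (\<chi> j. Gr mul idx n u g (inv_into {1..n} idx j))"
  have inj: "inj_on idx {1..n}" using idx bij_betw_def by blast
  have reidx: "\<And>G::'n \<Rightarrow> real. sum G UNIV = (\<Sum>k=1..n. G (idx k))"
    by (rule sum.reindex_bij_betw[OF idx, symmetric])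
  have "\<forall>X. formN F cand X = frechet_derivative (\<lambda>u. \<phi> (rprod mul (\<lambda>k. u $ idx k) n)) (at u) X"
  proof
    fix X :: "'a^'n"
    have "formN F cand X = (\<Sum>k=1..n. F (cand $ idx k) (X $ idx k))"
      unfolding formN_def by (rule reidx)
    also have "\<dots> = (\<Sum>k=1..n. F (Gr mul idx n u g k) (X $ idx k))"
      unfolding cand_def using inv_into_f_f[OF inj] by (intro sum.cong refl) simp
    also have "\<dots> = F g (Dr mul idx n u X)"
      by (rule Dr_rep[OF af(3) af(4) af(6) n, symmetric])
    also have "\<dots> = frechet_derivative (\<lambda>u. \<phi> (rprod mul (\<lambda>k. u $ idx k) n)) (at u) X"
      unfolding fd using gw by simp
    finally show "formN F cand X = frechet_derivative (\<lambda>u. \<phi> (rprod mul (\<lambda>k. u $ idx k) n)) (at u) X" .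
  qed
  then have "grad (formN F) (\<lambda>u. \<phi> (rprod mul (\<lambda>k. u $ idx k) n)) u = cand"
    using grad_eqI[OF formN_facts(1)[OF af(3) nd]] formN_facts(2)[OF af(3) nd] by blast
  then show ?thesis unfolding gradN_def cand_def g_def M_def using inv_into_f_f[OF inj k] by simp
qed

theorem proposition5:
  fixes mul :: "'a::euclidean_space \<Rightarrow> 'a \<Rightarrow> 'a"
    and F :: "'a \<Rightarrow> 'a \<Rightarrow> real"
    and n :: nat
    and idx :: "nat \<Rightarrow> 'n::finite"
    and A B C D :: "'a^'n \<Rightarrow> 'a^'n"
  assumes alg: "assoc_algebra_with_form mul F"
    and idx: "bij_betw idx {1..n} UNIV"
    and lin: "linear A" "linear B" "linear C" "linear D"
    and adjA: "\<forall>i j. adj F (comp A i j) = (\<lambda>x. - comp A j i x)"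
    and adjD: "\<forall>i j. adj F (comp D i j) = (\<lambda>x. - comp D j i x)"
    and adjB: "\<forall>i j. adj F (comp B i j) = comp C j i"
    and poisson: "poisson_bracket (PBN mul F A B C D)"
    and cond_i: "\<forall>i\<in>{1..n-1}. \<forall>j\<in>{1..n-1}. \<forall>x.
        comp A (idx (i+1)) (idx (j+1)) x - comp D (idx i) (idx j) x
      + comp B (idx (i+1)) (idx j) x - comp C (idx i) (idx (j+1)) x = 0"
    and cond_ii: "\<forall>j\<in>{1..n-1}. \<forall>x.
        comp A (idx 1) (idx (j+1)) x + comp B (idx 1) (idx j) x = 0"
    and cond_iii: "\<forall>j\<in>{1..n-1}. \<forall>x.
        comp D (idx n) (idx j) x + comp C (idx n) (idx (j+1)) x = 0"
  shows "\<forall>\<phi> \<psi> :: 'a \<Rightarrow> real. smooth \<phi> \<and> smooth \<psi> \<longrightarrow>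
     PBN mul F A B C D (\<lambda>u. \<phi> (rprod mul (\<lambda>k. u $ idx k) n)) (\<lambda>u. \<psi> (rprod mul (\<lambda>k. u $ idx k) n))
     = (\<lambda>u. PB mul F (comp A (idx 1) (idx 1)) (comp B (idx 1) (idx n))
                      (comp C (idx n) (idx 1)) (comp D (idx n) (idx n)) \<phi> \<psi>
                 (rprod mul (\<lambda>k. u $ idx k) n))"
proof (intro allI impI)
  fix \<phi> \<psi> :: "'a \<Rightarrow> real"
  assume sm: "smooth \<phi> \<and> smooth \<psi>"
  have dphi: "\<forall>x. \<phi> differentiable (at x)" and dpsi: "\<forall>x. \<psi> differentiable (at x)"
    using sm unfolding smooth_def by (metis Ck.simps(2))+
  note af = alg_facts[OF alg]
  have nd: "\<forall>u. (\<forall>v. F u v = 0) \<longrightarrow> u = 0" using af(5) by blast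
  have linR: "linear (\<lambda>y. F x y)" for x using af(3) unfolding bilinear_def by auto
  have n: "n \<ge> 1"
  proof (rule ccontr)
    assume "\<not> n \<ge> 1"
    then have "{1..n} = {}" by auto
    then show False using idx unfolding bij_betw_def by auto
  qed
  define a where "a i j = comp A (idx i) (idx j)" for i j
  define b where "b i j = comp B (idx i) (idx j)" for i j
  define c where "c i j = comp C (idx i) (idx j)" for i j
  define d where "d i j = comp D (idx i) (idx j)" for i j
  have aA: "F (a i j x) y = - F x (a j i y)" for i j x y
  proof -
    have "F (a i j x) y = F x (adj F (comp A (idx i) (idx j)) y)"
      unfolding a_def by (rule adj_works[OF af(3) nd af(4) linear_comp[OF lin(1)]])
    then show ?thesis using adjA linear_neg[OF linR] a_def by simp
  qed
  have aD: "F (d i j x) y = - F x (d j i y)" for i j x y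
  proof -
    have "F (d i j x) y = F x (adj F (comp D (idx i) (idx j)) y)"
      unfolding d_def by (rule adj_works[OF af(3) nd af(4) linear_comp[OF lin(4)]])
    then show ?thesis using adjD linear_neg[OF linR] d_def by simp
  qed
  have aB: "F (b i j x) y = F x (c j i y)" for i j x y
  proof -
    have "F (b i j x) y = F x (adj F (comp B (idx i) (idx j)) y)"
      unfolding b_def by (rule adj_works[OF af(3) nd af(4) linear_comp[OF lin(2)]])
    then show ?thesis using adjB c_def by simp
  qed
  have reidx: "\<And>G::'n \<Rightarrow> real. sum G UNIV = (\<Sum>k=1..n. G (idx k))"
    by (rule sum.reindex_bij_betw[OF idx, symmetric])
  show "PBN mul F A B C D (\<lambda>u. \<phi> (rprod mul (\<lambda>k. u $ idx k) n)) (\<lambda>u. \<psi> (rprod mul (\<lambda>k. u $ idx k) n))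
     = (\<lambda>u. PB mul F (comp A (idx 1) (idx 1)) (comp B (idx 1) (idx n))
                      (comp C (idx n) (idx 1)) (comp D (idx n) (idx n)) \<phi> \<psi>
                 (rprod mul (\<lambda>k. u $ idx k) n))"
  proof
    fix u :: "'a^'n"
    define M where "M = rprod mul (\<lambda>k. u $ idx k) n"
    define z where "z ff a = (if a = 0 then mul (grad F ff M) M else mul (u $ idx a) (Gr mul idx n u (grad F ff M) a))"
      for ff :: "'a \<Rightarrow> real" and a
    have dLk: "dLN mul F (\<lambda>u. ff (rprod mul (\<lambda>k. u $ idx k) n)) u (idx k) = z ff k"
      if "\<forall>x. ff differentiable (at x)" "k \<in> {1..n}" for ff k
      unfolding dLN_def gradN_rprod[OF alg n idx that] z_def M_def using that(2) by simp
    have dRk: "dRN mul F (\<lambda>u. ff (rprod mul (\<lambda>k. u $ idx k) n)) u (idx k) = z ff (k - 1)"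
      if "\<forall>x. ff differentiable (at x)" "k \<in> {1..n}" for ff k
    proof (cases "k = 1")
      case True
      then show ?thesis unfolding dRN_def gradN_rprod[OF alg n idx that] z_def M_def
        using Gr_first[OF af(2) n] by simp
    next
      case False
      then have "1 \<le> k - 1" "k - 1 < n" "Suc (k - 1) = k" "(k - 1 = 0) = False" using that(2) by auto
      then show ?thesis unfolding dRN_def gradN_rprod[OF alg n idx that] z_def M_def
        using Gr_mid[OF af(2), of "k - 1" n u idx] by simp
    qed
    have dL: "dL mul F ff M = z ff n" for ff
    proof -
      have "n \<noteq> 0" using n by simp
      then show ?thesis unfolding dL_def z_def M_def using Gr_last[OF af(2) n, of u idx] by metis
    qed
    have dR: "dR mul F ff M = z ff 0" for ff
      unfolding dR_def z_def by simp
    have "PBN mul F A B C D (\<lambda>u. \<phi> (rprod mul (\<lambda>k. u $ idx k) n)) (\<lambda>u. \<psi> (rprod mul (\<lambda>k. u $ idx k) n)) u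
      = (\<Sum>i=1..n. \<Sum>j=1..n.
            F (a i j (z \<phi> (j-1))) (z \<psi> (i-1)) - F (d i j (z \<phi> j)) (z \<psi> i)
          + F (b i j (z \<phi> j)) (z \<psi> (i-1)) - F (c i j (z \<phi> (j-1))) (z \<psi> i))"
      unfolding PBN_def reidx a_def b_def c_def d_def
      by (intro sum.cong refl) (simp add: dLk dRk dphi dpsi)
    also have "\<dots> = F (a 1 1 (z \<phi> 0)) (z \<psi> 0) - F (d n n (z \<phi> n)) (z \<psi> n)
          + F (b 1 n (z \<phi> n)) (z \<psi> 0) - F (c n 1 (z \<phi> 0)) (z \<psi> n)"
      by (rule algebra_part[where F=F and a=a and b=b and c=c and d=d and z="z \<phi>" and w="z \<psi>" and n=n,
            OF af(3) af(4) n aA aD aB])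
         (use cond_i cond_ii cond_iii in \<open>simp_all add: a_def b_def c_def d_def\<close>)
    also have "\<dots> = PB mul F (comp A (idx 1) (idx 1)) (comp B (idx 1) (idx n))
                      (comp C (idx n) (idx 1)) (comp D (idx n) (idx n)) \<phi> \<psi> M"
      unfolding PB_def dL dR a_def b_def c_def d_def by simp
    finally show "PBN mul F A B C D (\<lambda>u. \<phi> (rprod mul (\<lambda>k. u $ idx k) n)) (\<lambda>u. \<psi> (rprod mul (\<lambda>k. u $ idx k) n)) u
      = PB mul F (comp A (idx 1) (idx 1)) (comp B (idx 1) (idx n))
                      (comp C (idx n) (idx 1)) (comp D (idx n) (idx n)) \<phi> \<psi>
                 (rprod mul (\<lambda>k. u $ idx k) n)" unfolding M_def .
  qed
qed

end
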